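(* Let $x_1,\dots,x_N\in\mathbb{R}^M$, let $w_1,\dots,w_N\ge0$, and fix $\Sigma\in\mathbb{R}^{M\times M}$ symmetric positive definite. Let $f(x\mid\mu,\Sigma)$ be the $\mathcal{N}(\mu,\Sigma)$ density and define $$L(\mu)=-\sum_{k=1}^N w_k\prod_{n=k}^N f(x_n\mid\mu,\Sigma),\qquad v_k(\mu)=\sum_{n=k}^N(x_n-\mu).$$ If $\mu\in\mathbb{R}^M$ satisfies $\Sigma\succeq \frac{v_k(\mu)v_k(\mu)^\top}{N-k+1}$ for all $k=1,\dots,N$, then the Hessian $\nabla^2 L(\mu)$ is positive semidefinite.
   Context: In the application $w_k=\pi(k)\prod_{n=1}^{k-1}g(x_n)$ with $\pi$ a prior on the outage time and $g$ the pre-outage density, so that $L$ is the negative (marginal) likelihood of the post-outage parameters. $A\succeq B$ means $A-B$ is positive semidefinite. *)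

theory Defs
  imports "HOL-Analysis.Analysis"
begin

definition psd :: "real^'m^'m \<Rightarrow> bool" where
  "psd A \<longleftrightarrow> (\<forall>v. v \<bullet> (A *v v) \<ge> 0)"

definition spd :: "real^'m^'m \<Rightarrow> bool" where
  "spd A \<longleftrightarrow> transpose A = A \<and> (\<forall>v. v \<noteq> 0 \<longrightarrow> v \<bullet> (A *v v) > 0)"

definition outer :: "real^'m \<Rightarrow> real^'m \<Rightarrow> real^'m^'m" where
  "outer u v = (\<chi> i j. u $ i * v $ j)"

definition gauss_density :: "real^'m \<Rightarrow> real^'m \<Rightarrow> real^'m^'m \<Rightarrow> real" where
  "gauss_density x mu S =
     (2 * pi) powr (- real CARD('m) / 2) * (det S) powr (-1/2) *
     exp (- (1/2) * ((x - mu) \<bullet> (matrix_inv S *v (x - mu))))"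

definition is_hessian :: "(real^'m \<Rightarrow> real) \<Rightarrow> real^'m \<Rightarrow> real^'m^'m \<Rightarrow> bool" where
  "is_hessian f x H \<longleftrightarrow> (\<exists>G. (\<forall>y. (f has_derivative (\<lambda>h. G y \<bullet> h)) (at y)) \<and>
                              (G has_derivative (\<lambda>h. H *v h)) (at x))"

definition negloglik :: "nat \<Rightarrow> (nat \<Rightarrow> real^'m) \<Rightarrow> (nat \<Rightarrow> real) \<Rightarrow> real^'m^'m \<Rightarrow> real^'m \<Rightarrow> real" where
  "negloglik N x w S mu = - (\<Sum>k=1..N. w k * (\<Prod>n=k..N. gauss_density (x n) mu S))"

definition vsum :: "nat \<Rightarrow> (nat \<Rightarrow> real^'m) \<Rightarrow> nat \<Rightarrow> real^'m \<Rightarrow> real^'m" where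
  "vsum N x k mu = (\<Sum>n=k..N. (x n - mu))"

end

theory Submission
  imports Defs
begin

lemma sym_inner:
  fixes A :: "real^'m^'m"
  assumes "transpose A = A"
  shows "u \<bullet> (A *v w) = (A *v u) \<bullet> w"
proof -
  have "u \<bullet> (A *v w) = (u v* A) \<bullet> w" by (simp add: dot_lmul_matrix)
  also have "u v* A = transpose A *v u" by simp
  finally show ?thesis using assms by simp
qed

lemma inv_props:
  fixes S :: "real^'m^'m"
  assumes "spd S"
  shows "S ** matrix_inv S = mat 1 \<and> matrix_inv S ** S = mat 1 \<and> transpose (matrix_inv S) = matrix_inv S"
proof -
  have ker: "\<forall>v. S *v v = 0 \<longrightarrow> v = 0"
    using assms unfolding spd_def by (metis inner_zero_right less_irrefl)
  then obtain B where B: "B ** S = mat 1" using matrix_left_invertible_ker by blast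
  then have "S ** B = mat 1" using matrix_left_right_inverse by blast
  then have ex: "\<exists>A'. S ** A' = mat 1 \<and> A' ** S = mat 1" using B by blast
  have P: "S ** matrix_inv S = mat 1 \<and> matrix_inv S ** S = mat 1"
    unfolding matrix_inv_def by (rule someI_ex[OF ex])
  have St: "transpose S = S" using assms spd_def by blast
  have "transpose (matrix_inv S) ** S = mat 1"
    by (metis P St matrix_transpose_mul transpose_mat)
  then have "transpose (matrix_inv S) = transpose (matrix_inv S) ** (S ** matrix_inv S)"
    using P by (simp add: matrix_mul_rid)
  also have "\<dots> = matrix_inv S"
    by (simp add: matrix_mul_assoc \<open>transpose (matrix_inv S) ** S = mat 1\<close> matrix_mul_lid)
  finally show ?thesis using P by blast
qed

lemma mv_deriv:
  fixes P :: "real^'m^'n"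
  assumes "(g has_derivative g') F"
  shows "((\<lambda>y. P *v g y) has_derivative (\<lambda>h. P *v g' h)) F"
  using bounded_linear.has_derivative[OF matrix_vector_mul_bounded_linear assms] .

lemma quad_deriv:
  fixes P :: "real^'m^'m"
  assumes "transpose P = P"
  shows "((\<lambda>y. (a - y) \<bullet> (P *v (a - y))) has_derivative (\<lambda>h. -2 * ((P *v (a - y)) \<bullet> h))) (at y)"
proof -
  have "((\<lambda>y. (a - y) \<bullet> (P *v (a - y))) has_derivative
     (\<lambda>h. (-h) \<bullet> (P *v (a - y)) + (a - y) \<bullet> (P *v (-h)))) (at y)"
  proof -
    have d1: "((\<lambda>x. a - x) has_derivative (\<lambda>h. -h)) (at y)"
      by (auto intro!: derivative_eq_intros)
    note d2 = mv_deriv[OF d1, of P]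
    show ?thesis using has_derivative_inner[OF d1 d2] by simp
  qed
  moreover have "(\<lambda>h. (-h) \<bullet> (P *v (a - y)) + (a - y) \<bullet> (P *v (-h))) = (\<lambda>h. -2 * ((P *v (a - y)) \<bullet> h))"
  proof
    fix h
    have "(a - y) \<bullet> (P *v (-h)) = (P *v (a - y)) \<bullet> (-h)" by (rule sym_inner[OF assms])
    then show "(-h) \<bullet> (P *v (a - y)) + (a - y) \<bullet> (P *v (-h)) = -2 * ((P *v (a - y)) \<bullet> h)"
      by (simp add: inner_commute)
  qed
  ultimately show ?thesis by simp
qed

lemma Q_deriv:
  fixes P :: "real^'m^'m"
  assumes "transpose P = P" "finite A"
  shows "((\<lambda>y. \<Sum>n\<in>A. (x n - y) \<bullet> (P *v (x n - y))) has_derivative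
           (\<lambda>h. -2 * ((P *v (\<Sum>n\<in>A. (x n - y))) \<bullet> h))) (at y)"
proof -
  have "((\<lambda>y. \<Sum>n\<in>A. (x n - y) \<bullet> (P *v (x n - y))) has_derivative
           (\<lambda>h. \<Sum>n\<in>A. -2 * ((P *v (x n - y)) \<bullet> h))) (at y)"
    by (rule has_derivative_sum) (rule quad_deriv[OF assms(1)])
  moreover have "(\<lambda>h. \<Sum>n\<in>A. -2 * ((P *v (x n - y)) \<bullet> h)) =
      (\<lambda>h. -2 * ((P *v (\<Sum>n\<in>A. (x n - y))) \<bullet> h))"
    by (simp add: linear_sum[OF matrix_vector_mul_linear] o_def inner_sum_left sum_distrib_left)
  ultimately show ?thesis by simp
qed

lemma V_deriv:
  fixes x :: "nat \<Rightarrow> real^'m"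
  shows "((\<lambda>y. \<Sum>n\<in>A. (x n - y)) has_derivative (\<lambda>h. - (real (card A) *\<^sub>R h))) (at y)"
proof -
  have "((\<lambda>y. \<Sum>n\<in>A. (x n - y)) has_derivative (\<lambda>h. \<Sum>n\<in>A. - h)) (at y)"
    by (rule has_derivative_sum) (auto intro!: derivative_eq_intros)
  moreover have "(\<lambda>h::real^'m. \<Sum>n\<in>A. - h) = (\<lambda>h. - (real (card A) *\<^sub>R h))"
  proof
    fix h :: "real^'m"
    have "(\<Sum>n\<in>A. - h) = - (\<Sum>n\<in>A. h)" by (rule sum_negf)
    then show "(\<Sum>n\<in>A. - h) = - (real (card A) *\<^sub>R h)" by (simp only: sum_constant_scaleR)
  qed
  ultimately show ?thesis by simp
qed

definition gc :: "real^'m^'m \<Rightarrow> real" where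
  "gc S = (2 * pi) powr (- real CARD('m) / 2) * (det S) powr (-1/2)"

lemma g_form:
  "(\<Prod>n\<in>A. gauss_density (x n) y S) =
     gc S ^ card A * exp (- (1/2) * (\<Sum>n\<in>A. (x n - y) \<bullet> (matrix_inv S *v (x n - y))))"
proof (cases "finite A")
  case True
  then show ?thesis
    by (simp add: gauss_density_def gc_def prod.distrib exp_sum[symmetric] sum_distrib_left)
next
  case False
  then show ?thesis by simp
qed

lemma g_deriv:
  fixes S :: "real^'m^'m" and x :: "nat \<Rightarrow> real^'m"
  assumes "transpose (matrix_inv S) = matrix_inv S" "finite A"
  shows "((\<lambda>y. \<Prod>n\<in>A. gauss_density (x n) y S) has_derivative
     (\<lambda>h. (\<Prod>n\<in>A. gauss_density (x n) y S) * ((matrix_inv S *v (\<Sum>n\<in>A. (x n - y))) \<bullet> h))) (at y)"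
proof -
  note Q = Q_deriv[OF assms, of x y]
  note Q2 = bounded_linear.has_derivative[OF bounded_linear_mult_right[of "- (1/2)"] Q]
  note Q3 = has_derivative_exp[OF Q2]
  note Q4 = bounded_linear.has_derivative[OF bounded_linear_mult_right[of "gc S ^ card A"] Q3]
  show ?thesis unfolding g_form using Q4 by (simp add: mult.commute mult.left_commute)
qed

lemma mv_scale: "((c::real) *\<^sub>R (A::real^'n^'m)) *v h = c *\<^sub>R (A *v h)"
  by (simp add: vec_eq_iff matrix_vector_mult_def sum_distrib_left mult.assoc)

lemma mv_neg: "(- (A::real^'n^'m)) *v h = - (A *v h)"
  by (simp add: vec_eq_iff matrix_vector_mult_def sum_negf)

lemma mv_vneg: "(A::real^'n^'m) *v (- h) = - (A *v h)"
  by (simp add: vec_eq_iff matrix_vector_mult_def sum_negf)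

lemma mv_vscale: "(A::real^'n^'m) *v ((c::real) *\<^sub>R h) = c *\<^sub>R (A *v h)"
  by (simp add: vec_eq_iff matrix_vector_mult_def sum_distrib_left mult.left_commute)

lemma mv_sum:
  fixes A :: "nat \<Rightarrow> real^'n^'m"
  shows "(\<Sum>k\<in>K. A k) *v h = (\<Sum>k\<in>K. A k *v h)"
proof (induction K rule: infinite_finite_induct)
  case (insert k K)
  then show ?case by (simp add: matrix_vector_mult_add_rdistrib)
qed simp_all

lemma outer_mv: "outer u u *v h = (u \<bullet> h) *\<^sub>R (u::real^'m)"
  by (simp add: vec_eq_iff outer_def matrix_vector_mult_def inner_vec_def sum_distrib_left mult_ac)

lemma key:
  fixes S :: "real^'m^'m"
  assumes spd: "spd S" and ps: "psd (S - (1 / m) *\<^sub>R outer v v)" and m: "m > 0"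
  shows "((matrix_inv S *v v) \<bullet> z)^2 \<le> m * (z \<bullet> (matrix_inv S *v z))"
proof -
  define P where "P = matrix_inv S"
  have ip: "S ** P = mat 1" "transpose P = P" using inv_props[OF spd] P_def by auto
  define y where "y = P *v z"
  have Sy: "S *v y = z" unfolding y_def by (simp add: matrix_vector_mul_assoc ip)
  have "0 \<le> y \<bullet> ((S - (1 / m) *\<^sub>R outer v v) *v y)" using ps psd_def by blast
  also have "\<dots> = y \<bullet> (S *v y) - (1/m) * ((v \<bullet> y) * (v \<bullet> y))"
    by (simp add: matrix_vector_mult_diff_rdistrib mv_scale outer_mv inner_diff_right inner_commute)
  also have "y \<bullet> (S *v y) = z \<bullet> (P *v z)" using Sy y_def by (simp add: inner_commute)
  also have "v \<bullet> y = (P *v v) \<bullet> z" unfolding y_def by (rule sym_inner[OF ip(2)])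
  finally have "(1/m) * ((P *v v) \<bullet> z)^2 \<le> z \<bullet> (P *v z)" by (simp add: power2_eq_square)
  then show ?thesis using m P_def by (simp add: divide_le_eq mult.commute)
qed

lemma gd_nonneg: "gauss_density a y S \<ge> 0"
  unfolding gauss_density_def by simp

theorem mainTheorem6:
  fixes N :: nat and x :: "nat \<Rightarrow> real^'m" and w :: "nat \<Rightarrow> real"
    and S :: "real^'m^'m" and mu :: "real^'m"
  assumes "\<And>k. k \<in> {1..N} \<Longrightarrow> w k \<ge> 0"
    and "spd S"
    and "\<And>k. k \<in> {1..N} \<Longrightarrow>
           psd (S - (1 / real (N - k + 1)) *\<^sub>R outer (vsum N x k mu) (vsum N x k mu))"
  shows "\<exists>H. is_hessian (negloglik N x w S) mu H \<and> psd H"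
proof -
  define P where "P = matrix_inv S"
  have Pt: "transpose P = P" using inv_props[OF assms(2)] P_def by auto
  define g where "g k y = (\<Prod>n=k..N. gauss_density (x n) y S)" for k y
  define V where "V k y = (\<Sum>n=k..N. (x n - y))" for k y
  define c where "c k = real (card {k..N})" for k
  define G where "G y = - (\<Sum>k=1..N. (w k * g k y) *\<^sub>R (P *v V k y))" for y
  define H where "H = - (\<Sum>k=1..N. (w k * g k mu) *\<^sub>R (outer (P *v V k mu) (P *v V k mu) - c k *\<^sub>R P))"
  have gd: "(g k has_derivative (\<lambda>h. g k y * ((P *v V k y) \<bullet> h))) (at y)" for k y
    unfolding g_def V_def P_def using g_deriv[OF Pt[unfolded P_def], of "{k..N}" x y] by simp
  have Vd: "(V k has_derivative (\<lambda>h. - (c k *\<^sub>R h))) (at y)" for k y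
    unfolding V_def c_def by (rule V_deriv)
  have L: "negloglik N x w S = (\<lambda>y. - (\<Sum>k=1..N. w k * g k y))"
    unfolding negloglik_def g_def by simp
  have D1: "(negloglik N x w S has_derivative (\<lambda>h. G y \<bullet> h)) (at y)" for y
  proof -
    have "((\<lambda>y. - (\<Sum>k=1..N. w k * g k y)) has_derivative
        (\<lambda>h. - (\<Sum>k=1..N. w k * (g k y * ((P *v V k y) \<bullet> h))))) (at y)"
      by (intro has_derivative_minus has_derivative_sum
            bounded_linear.has_derivative[OF bounded_linear_mult_right gd])
    moreover have "(\<lambda>h. - (\<Sum>k=1..N. w k * (g k y * ((P *v V k y) \<bullet> h)))) = (\<lambda>h. G y \<bullet> h)"
      unfolding G_def by (simp add: inner_sum_left mult.assoc)
    ultimately show ?thesis unfolding L by simp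
  qed
  have D2: "(G has_derivative (\<lambda>h. H *v h)) (at mu)"
  proof -
    have "(G has_derivative (\<lambda>h. - (\<Sum>k=1..N. (w k * g k mu) *\<^sub>R (P *v (- (c k *\<^sub>R h)))
            + (w k * (g k mu * ((P *v V k mu) \<bullet> h))) *\<^sub>R (P *v V k mu)))) (at mu)"
      unfolding G_def
      by (intro has_derivative_minus has_derivative_sum has_derivative_scaleR mv_deriv Vd
            bounded_linear.has_derivative[OF bounded_linear_mult_right gd])
    moreover have "(\<lambda>h. - (\<Sum>k=1..N. (w k * g k mu) *\<^sub>R (P *v (- (c k *\<^sub>R h)))
            + (w k * (g k mu * ((P *v V k mu) \<bullet> h))) *\<^sub>R (P *v V k mu))) = (\<lambda>h. H *v h)"
    proof
      fix h
      show "- (\<Sum>k=1..N. (w k * g k mu) *\<^sub>R (P *v (- (c k *\<^sub>R h)))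
            + (w k * (g k mu * ((P *v V k mu) \<bullet> h))) *\<^sub>R (P *v V k mu)) = H *v h"
        unfolding H_def
        by (simp add: mv_neg mv_sum mv_scale mv_vneg mv_vscale outer_mv
              matrix_vector_mult_diff_rdistrib algebra_simps sum.distrib sum_subtractf)
    qed
    ultimately show ?thesis by simp
  qed
  have psdH: "psd H"
    unfolding psd_def
  proof
    fix z
    have "z \<bullet> (H *v z) = (\<Sum>k=1..N. (w k * g k mu) *
             (c k * (z \<bullet> (P *v z)) - ((P *v V k mu) \<bullet> z)^2))"
      unfolding H_def
      by (simp add: mv_neg mv_sum mv_scale outer_mv matrix_vector_mult_diff_rdistrib
            inner_sum_right inner_diff_right algebra_simps power2_eq_square sum_subtractf inner_commute)
    also have "\<dots> \<ge> 0"
    proof (rule sum_nonneg)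
      fix k assume k: "k \<in> {1..N}"
      have ck: "c k = real (N - k + 1)" unfolding c_def using k by auto
      have "((P *v V k mu) \<bullet> z)^2 \<le> c k * (z \<bullet> (P *v z))"
        using key[OF assms(2), of "c k" "V k mu" z] assms(3)[OF k] k ck
        unfolding P_def V_def vsum_def by simp
      moreover have "w k * g k mu \<ge> 0"
        using assms(1)[OF k] unfolding g_def by (simp add: prod_nonneg gd_nonneg)
      ultimately show "0 \<le> (w k * g k mu) * (c k * (z \<bullet> (P *v z)) - ((P *v V k mu) \<bullet> z)^2)"
        by simp
    qed
    finally show "z \<bullet> (H *v z) \<ge> 0" .
  qed
  show ?thesis
    unfolding is_hessian_def using D1 D2 psdH by blast
qed

end
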